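(* Let $G$ be the Delaunay graph of a unit intensity Poisson process on $\mathbb{R}^2$, with edges drawn as straight segments between their endpoints, and let $\rho,\ell>0$. The probability that $G$ has an edge of length at least $\ell$ which intersects the square $Q(0,\rho)$ is at most $\left(\frac{\sqrt{32}\,\rho}{\ell}+8\right)^2 e^{-\ell^2/32}$.
   Context: $Q(x,R)=x+[-R,R]^2$. The Voronoi cell of $x\in V$ is $C(x)=\{z: d(z,x)=d(z,V)\}$; the Delaunay graph has vertex set $V$ and an edge $(x,y)$ iff $|C(x)\cap C(y)|>1$. *)

theory Defs
  imports "HOL-Probability.Probability"
begin

type_synonym point = "real ^ 2"

definition unit_poisson_process :: "'w measure \<Rightarrow> ('w \<Rightarrow> point set) \<Rightarrow> bool" where
  "unit_poisson_process M V \<longleftrightarrow>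
     prob_space M \<and>
     (\<forall>\<omega>\<in>space M. \<forall>A. bounded A \<longrightarrow> finite (V \<omega> \<inter> A)) \<and>
     (\<forall>A. A \<in> sets borel \<and> bounded A \<longrightarrow>
        (\<lambda>\<omega>. card (V \<omega> \<inter> A)) \<in> measurable M (count_space UNIV) \<and>
        (\<forall>n::nat. measure M {\<omega> \<in> space M. card (V \<omega> \<inter> A) = n}
                  = measure lborel A ^ n / fact n * exp (- measure lborel A))) \<and>
     (\<forall>(I::nat set) A. finite I \<longrightarrow>
        (\<forall>i\<in>I. A i \<in> sets borel \<and> bounded (A i)) \<longrightarrow>
        disjoint_family_on A I \<longrightarrow>
        prob_space.indep_vars M (\<lambda>_. count_space UNIV) (\<lambda>i \<omega>. card (V \<omega> \<inter> A i)) I)"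

definition square :: "point \<Rightarrow> real \<Rightarrow> point set" where
  "square x R = {z. \<forall>i. \<bar>z $ i - x $ i\<bar> \<le> R}"

definition voronoi_cell :: "point set \<Rightarrow> point \<Rightarrow> point set" where
  "voronoi_cell V x = {z. dist z x = infdist z V}"

definition delaunay_edge :: "point set \<Rightarrow> point \<Rightarrow> point \<Rightarrow> bool" where
  "delaunay_edge V x y \<longleftrightarrow> x \<in> V \<and> y \<in> V \<and> x \<noteq> y \<and>
     (\<exists>a b. a \<noteq> b \<and> a \<in> voronoi_cell V x \<inter> voronoi_cell V y \<and>
                     b \<in> voronoi_cell V x \<inter> voronoi_cell V y)"

end

theory Submission
  imports Defs
begin

lemma geom:
  assumes d: "delaunay_edge W x y" and xy: "dist x y \<ge> l" and p: "p \<in> closed_segment x y"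
    and l: "l > 0"
  shows "\<exists>c. dist c p \<le> l/2 \<and> W \<inter> ball c (l/2) = {}"
proof -
  from d obtain a where a: "a \<in> voronoi_cell W x" "a \<in> voronoi_cell W y"
    unfolding delaunay_edge_def by blast
  define R where "R = infdist a W"
  have ax: "dist a x = R" and ay: "dist a y = R"
    using a unfolding voronoi_cell_def R_def by (auto simp: dist_commute)
  have emp: "W \<inter> ball a R = {}"
    using infdist_le[of _ W a] unfolding R_def by (force simp: ball_def)
  have "dist x y \<le> dist x a + dist a y" by (rule dist_triangle)
  hence R2: "l/2 \<le> R" using xy ax ay by (simp add: dist_commute)
  have "closed_segment x y \<subseteq> cball a R"
    by (rule closed_segment_subset) (use ax ay in \<open>auto simp: dist_commute\<close>)
  with p have pa: "dist a p \<le> R" by auto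
  have Rp: "R > 0" using R2 l by linarith
  define c where "c = p + ((l/2)/R) *\<^sub>R (a - p)"
  have "dist c p = ((l/2)/R) * dist a p"
    unfolding c_def dist_norm using Rp l by (simp add: dist_norm)
  also have "\<dots> \<le> ((l/2)/R) * R" using pa Rp l by (intro mult_left_mono) auto
  finally have cp: "dist c p \<le> l/2" using Rp by simp
  have "c - a = (1 - (l/2)/R) *\<^sub>R (p - a)" unfolding c_def by (simp add: algebra_simps)
  hence "dist c a = (1 - (l/2)/R) * dist a p"
    using Rp R2 by (simp add: dist_norm norm_minus_commute)
  also have "\<dots> \<le> (1 - (l/2)/R) * R" using pa Rp R2 by (intro mult_left_mono) auto
  finally have ca: "dist c a \<le> R - l/2" using Rp by (simp add: algebra_simps)
  have "ball c (l/2) \<subseteq> ball a R"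
  proof
    fix z assume "z \<in> ball c (l/2)"
    hence "dist c z < l/2" by simp
    moreover have "dist a z \<le> dist a c + dist c z" by (rule dist_triangle)
    ultimately show "z \<in> ball a R" using ca by (simp add: dist_commute)
  qed
  with emp cp show ?thesis by blast
qed

lemma cell_sub:
  fixes c :: point
  assumes s: "s > 0" and sl: "2 * s^2 \<le> (l/2)^2" and l: "l > 0"
  shows "box (\<chi> i. of_int \<lfloor>c$i/s\<rfloor> * s) (\<chi> i. (of_int \<lfloor>c$i/s\<rfloor> + 1) * s) \<subseteq> ball c (l/2)"
proof
  fix z assume z: "z \<in> box (\<chi> i. of_int \<lfloor>c$i/s\<rfloor> * s) (\<chi> i. (of_int \<lfloor>c$i/s\<rfloor> + 1) * s)"
  have bd: "\<bar>(z - c)$i\<bar> < s" for i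
  proof -
    have "of_int \<lfloor>c$i/s\<rfloor> * s < z$i" "z$i < (of_int \<lfloor>c$i/s\<rfloor> + 1) * s"
      using z by (auto simp: mem_box_cart)
    moreover have "of_int \<lfloor>c$i/s\<rfloor> \<le> c$i/s" "c$i/s < of_int \<lfloor>c$i/s\<rfloor> + 1"
      by linarith+
    hence "of_int \<lfloor>c$i/s\<rfloor> * s \<le> (c$i/s) * s" "(c$i/s) * s < (of_int \<lfloor>c$i/s\<rfloor> + 1) * s"
      using s by (intro mult_right_mono mult_strict_right_mono; simp)+
    hence "of_int \<lfloor>c$i/s\<rfloor> * s \<le> c$i" "c$i < (of_int \<lfloor>c$i/s\<rfloor> + 1) * s"
      using s by simp_all
    ultimately show ?thesis by (simp add: algebra_simps)
  qed
  have "(norm (z - c))^2 = (z - c) \<bullet> (z - c)" by (simp add: power2_norm_eq_inner)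
  also have "\<dots> = (\<Sum>i\<in>UNIV. ((z - c)$i)^2)" by (simp add: inner_vec_def power2_eq_square)
  also have "\<dots> < (\<Sum>i\<in>(UNIV::2 set). s^2)"
  proof (rule sum_strict_mono)
    fix i :: 2
    have "\<bar>(z - c)$i\<bar>^2 < s^2" using bd[of i] by (intro power_strict_mono) auto
    thus "((z - c)$i)^2 < s^2" by simp
  qed auto
  also have "\<dots> = 2 * s^2" by simp
  also have "\<dots> \<le> (l/2)^2" by (rule sl)
  finally have "norm (z - c) < l/2" using power2_less_imp_less[of "norm (z - c)" "l/2"] l by simp
  thus "z \<in> ball c (l/2)" by (simp add: dist_norm norm_minus_commute)
qed

lemma box_measure:
  fixes g :: "2 \<Rightarrow> int" assumes s: "s > 0"
  shows "measure lborel (box (\<chi> i. of_int (g i) * s) (\<chi> i. (of_int (g i) + 1) * s)) = s^2"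
proof -
  let ?a = "(\<chi> i. of_int (g i) * s) :: point" and ?b = "(\<chi> i. (of_int (g i) + 1) * s) :: point"
  have "measure lborel (box ?a ?b) = measure lborel (cbox ?a ?b)" by (simp only: measure_lborel_box_eq measure_lborel_cbox_eq)
  also have "cbox ?a ?b \<noteq> {}"
  proof -
    have "?a \<in> cbox ?a ?b" using s by (auto simp: mem_box_cart algebra_simps)
    thus ?thesis by blast
  qed
  hence "measure lborel (cbox ?a ?b) = prod (\<lambda>i. ?b$i - ?a$i) UNIV" by (rule content_cbox_cart)
  also have "\<dots> = s^2" by (simp add: algebra_simps power2_eq_square)
  finally show ?thesis .
qed

theorem lemma19:
  fixes M :: "'w measure" and V :: "'w \<Rightarrow> point set" and r l :: real
  assumes "unit_poisson_process M V" and "r > 0" and "l > 0"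
  shows "\<exists>E \<in> sets M.
           {\<omega> \<in> space M. \<exists>x y. delaunay_edge (V \<omega>) x y \<and> dist x y \<ge> l \<and>
                               closed_segment x y \<inter> square 0 r \<noteq> {}} \<subseteq> E \<and>
           measure M E \<le> (sqrt 32 * r / l + 8)\<^sup>2 * exp (- l\<^sup>2 / 32)"
proof -
  note P = assms(1)[unfolded unit_poisson_process_def]
  have r: "r > 0" and l: "l > 0" by fact+
  define s where "s = l / sqrt 8"
  have s: "s > 0" using l by (simp add: s_def)
  have s2: "s^2 = l^2/8" by (simp add: s_def power_divide)
  have sl: "2 * s^2 \<le> (l/2)^2" using s2 by (simp add: power_divide)
  define lo where "lo = \<lfloor>(- r - l/2)/s\<rfloor>"
  define hi where "hi = \<lfloor>(r + l/2)/s\<rfloor>"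
  define K where "K = {lo..hi}"
  define cell where "cell = (\<lambda>g::2\<Rightarrow>int. box ((\<chi> i. of_int (g i) * s) :: point) (\<chi> i. (of_int (g i) + 1) * s))"
  define I where "I = (PiE UNIV (\<lambda>_::2. K))"
  define Ev where "Ev = (\<lambda>g. {\<omega> \<in> space M. card (V \<omega> \<inter> cell g) = 0})"
  define E where "E = (\<Union>g\<in>I. Ev g)"
  have finI: "finite I" unfolding I_def K_def by (intro finite_PiE) auto
  have cellb: "cell g \<in> sets borel" "bounded (cell g)" for g
    unfolding cell_def by auto
  have Evs: "Ev g \<in> sets M" for g
  proof -
    have m: "(\<lambda>\<omega>. card (V \<omega> \<inter> cell g)) \<in> measurable M (count_space UNIV)"
      using P cellb[of g] by blast
    have "(\<lambda>\<omega>. card (V \<omega> \<inter> cell g)) -` {0} \<inter> space M \<in> sets M"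
      by (rule measurable_sets[OF m]) auto
    moreover have "(\<lambda>\<omega>. card (V \<omega> \<inter> cell g)) -` {0} \<inter> space M = Ev g"
      unfolding Ev_def by auto
    ultimately show ?thesis by simp
  qed
  have Evm: "measure M (Ev g) = exp (- (l^2)/8)" for g
  proof -
    have "measure M (Ev g) = measure lborel (cell g) ^ 0 / fact 0 * exp (- measure lborel (cell g))"
      unfolding Ev_def using P cellb[of g] by blast
    also have "\<dots> = exp (- (s^2))" unfolding cell_def using box_measure[OF s, of g] by simp
    finally show ?thesis using s2 by simp
  qed
  have ES: "E \<in> sets M" unfolding E_def using finI Evs by (intro sets.finite_UN) auto
  have sub: "{\<omega> \<in> space M. \<exists>x y. delaunay_edge (V \<omega>) x y \<and> dist x y \<ge> l \<and>
                               closed_segment x y \<inter> square 0 r \<noteq> {}} \<subseteq> E"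
  proof (rule subsetI)
    fix \<omega> assume "\<omega> \<in> {\<omega> \<in> space M. \<exists>x y. delaunay_edge (V \<omega>) x y \<and> dist x y \<ge> l \<and>
                               closed_segment x y \<inter> square 0 r \<noteq> {}}"
    then obtain x y p where \<omega>: "\<omega> \<in> space M" and d: "delaunay_edge (V \<omega>) x y" and xy: "dist x y \<ge> l"
      and p1: "p \<in> closed_segment x y" and p2: "p \<in> square 0 r" by blast
    obtain c where cp: "dist c p \<le> l/2" and emp: "V \<omega> \<inter> ball c (l/2) = {}"
      using geom[OF d xy p1 l] by blast
    define g where "g = (\<lambda>i::2. \<lfloor>c$i/s\<rfloor>)"
    have ci: "\<bar>c$i\<bar> \<le> r + l/2" for i
    proof -
      have "\<bar>(c - p)$i\<bar> \<le> norm (c - p)" by (rule component_le_norm_cart)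
      moreover have "\<bar>p$i\<bar> \<le> r" using p2 by (simp add: square_def)
      ultimately show ?thesis using cp by (simp add: dist_norm)
    qed
    have gI: "g \<in> I" unfolding I_def K_def g_def lo_def hi_def
    proof (rule PiE_I)
      fix i :: 2
      have "\<lfloor>(- r - l/2)/s\<rfloor> \<le> \<lfloor>c$i/s\<rfloor>" using ci[of i] s
        by (intro floor_mono divide_right_mono) auto
      moreover have "\<lfloor>c$i/s\<rfloor> \<le> \<lfloor>(r + l/2)/s\<rfloor>" using ci[of i] s
        by (intro floor_mono divide_right_mono) auto
      ultimately show "\<lfloor>c$i/s\<rfloor> \<in> {\<lfloor>(- r - l/2)/s\<rfloor>..\<lfloor>(r + l/2)/s\<rfloor>}" by simp
    qed simp
    have "cell g \<subseteq> ball c (l/2)"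
      unfolding cell_def g_def using cell_sub[OF s sl l, of c] by simp
    hence "V \<omega> \<inter> cell g = {}" using emp by blast
    hence "\<omega> \<in> Ev g" unfolding Ev_def using \<omega> by simp
    with gI show "\<omega> \<in> E" unfolding E_def by blast
  qed
  have cardI: "card I = card K ^ 2" unfolding I_def by (simp add: card_PiE)
  have "real (card K) \<le> sqrt 32 * r / l + 8"
  proof -
    define A where "A = sqrt 8 * r / l + sqrt 8 / 2"
    have cK: "card K = nat (hi - lo + 1)" unfolding K_def by simp
    have h0: "of_int hi \<le> (r + l/2)/s" unfolding hi_def by (rule of_int_floor_le)
    have l0: "(- r - l/2)/s < of_int lo + 1" unfolding lo_def by (rule real_of_int_floor_add_one_gt)
    have e1: "(r + l/2)/s = A" unfolding s_def A_def using l by (simp add: field_simps)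
    have e2: "(- r - l/2)/s = - A" unfolding s_def A_def using l by (simp add: field_simps)
    have s32: "sqrt 32 = 2 * sqrt 8"
    proof -
      have "sqrt 32 = sqrt (4 * (8::real))" by simp
      also have "\<dots> = 2 * sqrt 8" by (simp only: real_sqrt_mult) simp
      finally show ?thesis .
    qed
    have s8: "sqrt 8 < 3" by (rule real_less_lsqrt) auto
    have h1: "of_int hi \<le> A" using h0 unfolding e1 .
    have l1: "- A < of_int lo + 1" using l0 unfolding e2 .
    have "real_of_int (hi - lo + 1) = of_int hi - of_int lo + 1" by simp
    also have "\<dots> < 2 * A + 2" using h1 l1 by linarith
    finally have "real_of_int (hi - lo + 1) < 2 * A + 2" .
    also have "2 * A + 2 = sqrt 32 * r / l + sqrt 8 + 2" unfolding A_def s32 by (simp add: field_simps)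
    finally have m: "real_of_int (hi - lo + 1) \<le> sqrt 32 * r / l + 8" using s8 by linarith
    have "sqrt 32 * r / l \<ge> 0" using r l by simp
    hence "real (nat (hi - lo + 1)) \<le> sqrt 32 * r / l + 8" using m
    proof (cases "hi - lo + 1 \<ge> 0")
      case True
      hence "real (nat (hi - lo + 1)) = real_of_int (hi - lo + 1)" by (rule of_nat_nat)
      thus ?thesis using m by simp
    next
      case False
      hence "nat (hi - lo + 1) = 0" by simp
      thus ?thesis using \<open>sqrt 32 * r / l \<ge> 0\<close> by simp
    qed
    thus ?thesis unfolding cK .
  qed
  hence cK2: "real (card K) ^ 2 \<le> (sqrt 32 * r / l + 8)^2" by (intro power_mono) auto
  have "measure M E \<le> (\<Sum>g\<in>I. measure M (Ev g))" unfolding E_def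
    using finI Evs by (intro measure_UNION_le) auto
  also have "\<dots> = real (card K) ^ 2 * exp (- (l^2)/8)" using Evm cardI by simp
  also have "\<dots> \<le> (sqrt 32 * r / l + 8)^2 * exp (- (l^2)/32)"
    using cK2 by (intro mult_mono) (auto simp: power2_eq_square)
  finally show ?thesis using ES sub by blast
qed

end
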